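(* Consider the lifted multi-agent system described in the context, run with the dynamic edge weights of Algorithm 1 (MWN-PPAC). Then the system achieves asymptotic average consensus: $$\lim_{k\to\infty}\boldsymbol{x}(k)=\mathds{1}_n\otimes \mathrm{Avg}(\boldsymbol{x}(0)),\qquad \mathrm{Avg}(\boldsymbol{x}(0))=\frac1n\sum_{i=1}^n \boldsymbol{x}_i(0)\in\mathbb{R}^{D}.$$
   Context: Setting: $n>1$ agents, communication graph $\mathcal{G}=(\mathcal{V},\mathcal{E})$ with $\mathcal{V}=\{1,\dots,n\}$, undirected and connected; $\mathcal{N}_i=\{j:(i,j)\in\mathcal{E}\}$. Each agent originally has a real state in $\mathbb{R}^d$ and lifts it by prepending a virtual state in $\mathbb{R}^{d'}$ ($d'\ge 3$), giving $\boldsymbol{x}_i(k)\in\mathbb{R}^{D}$, $D=d+d'$ (first $d'$ coordinates virtual, last $d$ coordinates real). Update rule, with fixed $\sigma>0$: $$\boldsymbol{x}_i(k+1)=\boldsymbol{x}_i(k)+\sigma\sum_{j\in\mathcal{N}_i}A_{ij}(k)\big(\boldsymbol{x}_j(k)-\boldsymbol{x}_i(k)\big),\quad k\in\mathbb{N},$$ and $\boldsymbol{x}(k)=(\boldsymbol{x}_1(k)^\top,\dots,\boldsymbol{x}_n(k)^\top)^\top$. Auxiliary vectors: $\boldsymbol{v}_1,\dots,\boldsymbol{v}_D\in\mathbb{R}^D$ nonzero and mutually orthogonal, each with at least 2 nonzero entries, $\boldsymbol{v}_1$ having fewer than $d'$ nonzero entries, and all entries of $\boldsymbol{v}_D$ nonzero.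 Let $P_{\boldsymbol v}=\boldsymbol v\boldsymbol v^\top/(\boldsymbol v^\top\boldsymbol v)$. Edge weights (Algorithm 1): at $k=0$, $A_{ij}(0)=A_{ji}(0)\in\mathbb{R}^{D\times D}$ for each edge; if one endpoint is legitimate and the other honest-but-curious, $A_{ij}(0)=\alpha_{ij}P_{\boldsymbol v_1}+\beta_{ij}P_{\boldsymbol v_D}$ with $\alpha_{ij},\beta_{ij}>0$, otherwise $A_{ij}(0)$ is arbitrary. For $k\ge1$ and $(i,j)\in\mathcal{E}$: $A_{ij}(k)=A_{ji}(k)=\gamma_{ij}^{\rho(k)}P_{\boldsymbol v_{\rho(k)}}+\zeta_{ij}^{\rho(k)}P_{\boldsymbol v_D}$, where $d^*=D-1$, $\rho(k)=k \bmod d^*$ if this is nonzero and $\rho(k)=d^*$ otherwise, and $0<\gamma_{ij}^{\rho(k)},\zeta_{ij}^{\rho(k)}<\frac{1}{4(n-1)\sigma}$ (with $\gamma_{ij}=\gamma_{ji}$, $\zeta_{ij}=\zeta_{ji}$). $A_{ij}(k)=0$ if $(i,j)\notin\mathcal{E}$. *)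

theory Defs
  imports Complex_Main
begin

text \<open>Vectors in R^D are represented as functions nat => real, only the
  coordinates 0..D-1 being relevant; D x D matrices as nat => nat => real.
  Agents are indexed 0..n-1 (the paper uses 1..n); auxiliary vectors v_1..v_D
  are indexed 1..D as in the paper.\<close>

definition dotD :: "nat \<Rightarrow> (nat \<Rightarrow> real) \<Rightarrow> (nat \<Rightarrow> real) \<Rightarrow> real" where
  "dotD D u w = (\<Sum>c<D. u c * w c)"

definition projM :: "nat \<Rightarrow> (nat \<Rightarrow> real) \<Rightarrow> nat \<Rightarrow> nat \<Rightarrow> real" where
  "projM D v = (\<lambda>a b. v a * v b / dotD D v v)"

definition matvec :: "nat \<Rightarrow> (nat \<Rightarrow> nat \<Rightarrow> real) \<Rightarrow> (nat \<Rightarrow> real) \<Rightarrow> nat \<Rightarrow> real" where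
  "matvec D M y = (\<lambda>a. \<Sum>b<D. M a b * y b)"

definition nnz :: "nat \<Rightarrow> (nat \<Rightarrow> real) \<Rightarrow> nat" where
  "nnz D v = card {c. c < D \<and> v c \<noteq> 0}"

definition rho :: "nat \<Rightarrow> nat \<Rightarrow> nat" where
  "rho dstar k = (if k mod dstar \<noteq> 0 then k mod dstar else dstar)"

definition undirected_connected :: "nat \<Rightarrow> (nat \<times> nat) set \<Rightarrow> bool" where
  "undirected_connected n E \<longleftrightarrow>
     E \<subseteq> {..<n} \<times> {..<n} \<and> (\<forall>i j. (i,j) \<in> E \<longrightarrow> (j,i) \<in> E) \<and>
     (\<forall>i. (i,i) \<notin> E) \<and> (\<forall>i<n. \<forall>j<n. (i,j) \<in> E\<^sup>*)"

definition nbrs :: "(nat \<times> nat) set \<Rightarrow> nat \<Rightarrow> nat set" where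
  "nbrs E i = {j. (i,j) \<in> E}"

end

theory Submission
  imports Defs "HOL-Analysis.Convex" "Jordan_Normal_Form.Determinant"
begin


lemma sum_nbrs_E:
  assumes "E \<subseteq> {..<n} \<times> {..<n}"
  shows "(\<Sum>i<n. \<Sum>j\<in>nbrs E i. f i j) = (\<Sum>(i,j)\<in>E. f i j)"
proof -
  have fin: "finite (nbrs E i)" for i
    by (rule finite_subset[of _ "{..<n}"]) (use assms in \<open>auto simp: nbrs_def\<close>)
  have S: "Sigma {..<n} (nbrs E) = E" using assms by (auto simp: nbrs_def)
  have "(\<Sum>i<n. \<Sum>j\<in>nbrs E i. f i j) = (\<Sum>(i,j)\<in>Sigma {..<n} (nbrs E). f i j)"
    by (rule sum.Sigma[of "{..<n}" "nbrs E" f]) (simp_all add: fin)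
  then show ?thesis by (simp only: S)
qed

lemma sum_swap_E:
  assumes "\<forall>i j. (i,j) \<in> E \<longrightarrow> (j,i) \<in> E"
  shows "(\<Sum>(i,j)\<in>E. f i j) = (\<Sum>(i,j)\<in>E. f j i)"
proof (rule sum.reindex_bij_witness[of _ prod.swap prod.swap])
  fix a assume "a \<in> E" then show "prod.swap (prod.swap a) = a" by simp
next
  fix a assume "a \<in> E" then show "prod.swap a \<in> E" using assms by (cases a) simp
next
  fix a assume "a \<in> E" then show "prod.swap (prod.swap a) = a" by simp
next
  fix a assume "a \<in> E" then show "prod.swap a \<in> E" using assms by (cases a) simp
next
  fix a assume "a \<in> E" then show "(case prod.swap a of (i, j) \<Rightarrow> f j i) = (case a of (i, j) \<Rightarrow> f i j)"
    by (cases a) simp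
qed

lemma antisym_sum_zero:
  assumes "E \<subseteq> {..<n} \<times> {..<n}" "\<forall>i j. (i,j) \<in> E \<longrightarrow> (j,i) \<in> E"
    and "\<forall>i j. (i,j) \<in> E \<longrightarrow> f i j = - f j i"
  shows "(\<Sum>i<n. \<Sum>j\<in>nbrs E i. f i j) = (0::real)"
proof -
  let ?S = "(\<Sum>(i,j)\<in>E. f i j)"
  have "?S = (\<Sum>(i,j)\<in>E. f j i)" by (rule sum_swap_E[OF assms(2)])
  also have "\<dots> = (\<Sum>(i,j)\<in>E. - f i j)"
    by (rule sum.cong) (use assms(3) in auto)
  also have "\<dots> = - ?S" by (simp add: sum_negf case_prod_unfold)
  finally have "?S = 0" by simp
  then show ?thesis by (simp only: sum_nbrs_E[OF assms(1), of f])
qed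

lemma weighted_CS:
  fixes w b :: "'a \<Rightarrow> real"
  assumes "\<forall>j\<in>A. 0 \<le> w j"
  shows "(\<Sum>j\<in>A. w j * b j)^2 \<le> (\<Sum>j\<in>A. w j) * (\<Sum>j\<in>A. w j * (b j)^2)"
proof -
  have "(\<Sum>j\<in>A. w j * b j) = (\<Sum>j\<in>A. sqrt (w j) * (sqrt (w j) * b j))"
    by (rule sum.cong) (use assms in \<open>auto simp: real_sqrt_mult[symmetric]\<close>)
  also have "(\<dots>)^2 \<le> (\<Sum>j\<in>A. (sqrt (w j))^2) * (\<Sum>j\<in>A. (sqrt (w j) * b j)^2)"
    by (rule Cauchy_Schwarz_ineq_sum)
  also have "\<dots> = (\<Sum>j\<in>A. w j) * (\<Sum>j\<in>A. w j * (b j)^2)"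
    using assms by (simp add: power_mult_distrib)
  finally show ?thesis .
qed



lemma sq_tendsto0: "((\<lambda>m. (f m)^2) \<longlongrightarrow> (0::real)) F \<Longrightarrow> (f \<longlongrightarrow> 0) F"
proof -
  assume "((\<lambda>m. (f m)^2) \<longlongrightarrow> (0::real)) F"
  from tendsto_real_sqrt[OF this] have "((\<lambda>m. \<bar>f m\<bar>) \<longlongrightarrow> 0) F" by simp
  then show ?thesis by (simp add: tendsto_rabs_zero_iff)
qed

lemma consensus:
  fixes n :: nat and E :: "(nat \<times> nat) set" and y :: "nat \<Rightarrow> nat \<Rightarrow> real"
    and w :: "nat \<Rightarrow> nat \<Rightarrow> nat \<Rightarrow> real" and g :: "nat \<Rightarrow> nat" and \<epsilon> :: real
  assumes n1: "n > 1" and graph: "undirected_connected n E"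
    and wsym: "\<forall>k i j. w k i j = w k j i"
    and wnn: "\<forall>k i j. (i,j) \<in> E \<longrightarrow> 0 \<le> w k i j"
    and wle: "\<forall>k i j. (i,j) \<in> E \<longrightarrow> w k i j \<le> 1 / (4 * (real n - 1))"
    and upd: "\<forall>k. \<forall>i<n. y (Suc k) i = y k i + (\<Sum>j\<in>nbrs E i. w k i j * (y k j - y k i))"
    and g: "strict_mono g" and eps: "\<epsilon> > 0"
    and good: "\<forall>m i j. (i,j) \<in> E \<longrightarrow> \<epsilon> \<le> w (g m) i j"
  shows "\<forall>i<n. (\<lambda>k. y k i) \<longlonglongrightarrow> (1 / real n) * (\<Sum>j<n. y 0 j)"
proof -
  have Esub: "E \<subseteq> {..<n} \<times> {..<n}" and Esym: "\<forall>i j. (i,j) \<in> E \<longrightarrow> (j,i) \<in> E"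
    and Eirr: "\<forall>i. (i,i) \<notin> E" and Econ: "\<forall>i<n. \<forall>j<n. (i,j) \<in> E\<^sup>*"
    using graph unfolding undirected_connected_def by auto
  have finE: "finite E" using Esub by (rule finite_subset) auto
  have nbsub: "nbrs E i \<subseteq> {..<n} - {i}" for i using Esub Eirr by (auto simp: nbrs_def)
  have nbfin: "finite (nbrs E i)" for i using nbsub[of i] by (rule finite_subset) auto
  have sumpres: "(\<Sum>i<n. y k i) = (\<Sum>i<n. y 0 i)" for k
  proof (induction k)
    case (Suc k)
    have "(\<Sum>i<n. y (Suc k) i) = (\<Sum>i<n. y k i) + (\<Sum>i<n. \<Sum>j\<in>nbrs E i. w k i j * (y k j - y k i))"
      using upd by (simp add: sum.distrib)
    also have "(\<Sum>i<n. \<Sum>j\<in>nbrs E i. w k i j * (y k j - y k i)) = 0"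
      by (rule antisym_sum_zero[OF Esub Esym]) (use wsym in \<open>auto simp: algebra_simps\<close>)
    finally show ?case using Suc by simp
  qed simp
  define a where "a = (1 / real n) * (\<Sum>j<n. y 0 j)"
  have suma: "(\<Sum>i<n. y k i) = real n * a" for k using sumpres[of k] n1 by (simp add: a_def)
  define z where "z k i = y k i - a" for k i
  define V where "V k = (\<Sum>i<n. (z k i)^2)" for k
  define Q where "Q k = (\<Sum>(i,j)\<in>E. w k i j * (z k i - z k j)^2)" for k
  have Qnn: "0 \<le> Q k" for k unfolding Q_def using wnn by (intro sum_nonneg) auto
  have Vnn: "0 \<le> V k" for k unfolding V_def by (intro sum_nonneg) auto
  have rowsum: "(\<Sum>j\<in>nbrs E i. w k i j) \<le> 1/4" if "i < n" for k i
  proof -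
    have "(\<Sum>j\<in>nbrs E i. w k i j) \<le> (\<Sum>j\<in>nbrs E i. 1 / (4 * (real n - 1)))"
      using wle by (intro sum_mono) (auto simp: nbrs_def)
    also have "\<dots> = real (card (nbrs E i)) / (4 * (real n - 1))" by simp
    also have "card (nbrs E i) \<le> card ({..<n} - {i})" by (rule card_mono) (use nbsub in auto)
    then have "real (card (nbrs E i)) \<le> real n - 1" using that by simp
    then have "real (card (nbrs E i)) / (4 * (real n - 1)) \<le> (real n - 1) / (4 * (real n - 1))"
      using n1 by (intro divide_right_mono) auto
    also have "\<dots> = 1/4" using n1 by simp
    finally show ?thesis .
  qed
  have decr: "V (Suc k) \<le> V k - 3/4 * Q k" for k
  proof -
    define u where "u i = (\<Sum>j\<in>nbrs E i. w k i j * (z k j - z k i))" for i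
    have zs: "z (Suc k) i = z k i + u i" if "i < n" for i
      using upd that by (simp add: z_def u_def)
    have "V (Suc k) = (\<Sum>i<n. (z k i + u i)^2)" unfolding V_def using zs by (intro sum.cong) auto
    also have "\<dots> = V k + 2 * (\<Sum>i<n. z k i * u i) + (\<Sum>i<n. (u i)^2)"
      unfolding V_def by (simp add: power2_sum sum.distrib sum_distrib_left algebra_simps)
    finally have V1: "V (Suc k) = V k + 2 * (\<Sum>i<n. z k i * u i) + (\<Sum>i<n. (u i)^2)" .
    define S where "S = (\<Sum>(i,j)\<in>E. w k i j * (z k i * (z k j - z k i)))"
    have "(\<Sum>i<n. z k i * u i) = (\<Sum>i<n. \<Sum>j\<in>nbrs E i. w k i j * (z k i * (z k j - z k i)))"
      unfolding u_def by (simp add: sum_distrib_left algebra_simps)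
    also have "\<dots> = S" unfolding S_def by (rule sum_nbrs_E[OF Esub])
    finally have zu: "(\<Sum>i<n. z k i * u i) = S" .
    have "S = (\<Sum>(i,j)\<in>E. w k j i * (z k j * (z k i - z k j)))"
      unfolding S_def by (rule sum_swap_E[OF Esym])
    also have "\<dots> = (\<Sum>(i,j)\<in>E. w k i j * (z k j * (z k i - z k j)))"
      using wsym by simp
    finally have "2 * S = S + (\<Sum>(i,j)\<in>E. w k i j * (z k j * (z k i - z k j)))" by simp
    also have "\<dots> = (\<Sum>(i,j)\<in>E. w k i j * (z k i * (z k j - z k i)) + w k i j * (z k j * (z k i - z k j)))"
      unfolding S_def by (simp add: sum.distrib case_prod_unfold)
    also have "\<dots> = - Q k"
      unfolding Q_def by (simp add: sum_negf[symmetric] case_prod_unfold power2_eq_square algebra_simps)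
    finally have S2: "2 * S = - Q k" .
    have usq: "(u i)^2 \<le> 1/4 * (\<Sum>j\<in>nbrs E i. w k i j * (z k i - z k j)^2)" if "i < n" for i
    proof -
      have "(u i)^2 \<le> (\<Sum>j\<in>nbrs E i. w k i j) * (\<Sum>j\<in>nbrs E i. w k i j * (z k j - z k i)^2)"
        unfolding u_def by (rule weighted_CS) (use wnn in \<open>auto simp: nbrs_def\<close>)
      also have "\<dots> \<le> 1/4 * (\<Sum>j\<in>nbrs E i. w k i j * (z k j - z k i)^2)"
        using rowsum[OF that] wnn by (intro mult_right_mono sum_nonneg) (auto simp: nbrs_def)
      also have "(\<Sum>j\<in>nbrs E i. w k i j * (z k j - z k i)^2) = (\<Sum>j\<in>nbrs E i. w k i j * (z k i - z k j)^2)"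
        by (simp add: power2_commute)
      finally show ?thesis .
    qed
    have "(\<Sum>i<n. (u i)^2) \<le> (\<Sum>i<n. 1/4 * (\<Sum>j\<in>nbrs E i. w k i j * (z k i - z k j)^2))"
      using usq by (intro sum_mono) auto
    also have "\<dots> = 1/4 * (\<Sum>i<n. \<Sum>j\<in>nbrs E i. w k i j * (z k i - z k j)^2)"
      by (rule sum_distrib_left[symmetric])
    also have "(\<Sum>i<n. \<Sum>j\<in>nbrs E i. w k i j * (z k i - z k j)^2) = Q k"
      unfolding Q_def by (rule sum_nbrs_E[OF Esub])
    finally have "(\<Sum>i<n. (u i)^2) \<le> 1/4 * Q k" .
    then show ?thesis using V1 zu S2 by linarith
  qed
  have "decseq V" unfolding decseq_Suc_iff
  proof
    fix k show "V (Suc k) \<le> V k" using decr[of k] Qnn[of k] by linarith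
  qed
  then obtain L where VL: "V \<longlonglongrightarrow> L" using decseq_convergent[of V 0] Vnn by blast
  have "(\<lambda>k. V k - V (Suc k)) \<longlonglongrightarrow> L - L"
    by (intro tendsto_diff VL LIMSEQ_Suc)
  then have "(\<lambda>k. 4/3 * (V k - V (Suc k))) \<longlonglongrightarrow> 4/3 * (L - L)"
    by (rule tendsto_mult[OF tendsto_const])
  then have lim43: "(\<lambda>k. 4/3 * (V k - V (Suc k))) \<longlonglongrightarrow> 0" by simp
  have Q0: "Q \<longlonglongrightarrow> 0"
  proof (rule tendsto_sandwich[of "\<lambda>_. 0" Q _ "\<lambda>k. 4/3 * (V k - V (Suc k))"])
    show "\<forall>\<^sub>F k in sequentially. 0 \<le> Q k" using Qnn by (simp add: always_eventually)
    have "Q k \<le> 4/3 * (V k - V (Suc k))" for k using decr[of k] by (simp add: field_simps)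
    then show "\<forall>\<^sub>F k in sequentially. Q k \<le> 4/3 * (V k - V (Suc k))" by (simp add: always_eventually)
    show "((\<lambda>_. 0) \<longlongrightarrow> (0::real)) sequentially" by (rule tendsto_const)
    show "(\<lambda>k. 4/3 * (V k - V (Suc k))) \<longlonglongrightarrow> 0" by (rule lim43)
  qed
  have edge: "(\<lambda>m. y (g m) i - y (g m) j) \<longlonglongrightarrow> 0" if ij: "(i,j) \<in> E" for i j
  proof -
    have le: "(y (g m) i - y (g m) j)^2 \<le> (1/\<epsilon>) * Q (g m)" for m
    proof -
      have "\<epsilon> * (y (g m) i - y (g m) j)^2 \<le> w (g m) i j * (y (g m) i - y (g m) j)^2"
        using good ij by (intro mult_right_mono) auto
      also have "\<dots> = w (g m) i j * (z (g m) i - z (g m) j)^2" by (simp add: z_def)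
      also have "\<dots> \<le> Q (g m)" unfolding Q_def
        using member_le_sum[of "(i,j)" E "\<lambda>(i,j). w (g m) i j * (z (g m) i - z (g m) j)^2"]
          ij finE wnn by auto
      finally have "\<epsilon> * (y (g m) i - y (g m) j)^2 \<le> Q (g m)" .
      then show ?thesis using eps by (simp add: field_simps)
    qed
    have "(Q \<circ> g) \<longlonglongrightarrow> 0" by (rule LIMSEQ_subseq_LIMSEQ[OF Q0 g])
    then have "(\<lambda>m. Q (g m)) \<longlonglongrightarrow> 0" by (simp add: comp_def)
    then have "(\<lambda>m. (1/\<epsilon>) * Q (g m)) \<longlonglongrightarrow> (1/\<epsilon>) * 0"
      by (rule tendsto_mult[OF tendsto_const])
    then have lim: "(\<lambda>m. (1/\<epsilon>) * Q (g m)) \<longlonglongrightarrow> 0" by simp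
    have "(\<lambda>m. (y (g m) i - y (g m) j)^2) \<longlonglongrightarrow> 0"
    proof (rule tendsto_sandwich[of "\<lambda>_. 0" _ _ "\<lambda>m. (1/\<epsilon>) * Q (g m)"])
      show "\<forall>\<^sub>F m in sequentially. 0 \<le> (y (g m) i - y (g m) j)^2" by simp
      show "\<forall>\<^sub>F m in sequentially. (y (g m) i - y (g m) j)^2 \<le> (1/\<epsilon>) * Q (g m)"
        using le by (simp add: always_eventually)
      show "((\<lambda>_. 0) \<longlongrightarrow> (0::real)) sequentially" by (rule tendsto_const)
      show "(\<lambda>m. (1/\<epsilon>) * Q (g m)) \<longlonglongrightarrow> 0" by (rule lim)
    qed
    then show ?thesis by (rule sq_tendsto0)
  qed
  have path: "(\<lambda>m. y (g m) i - y (g m) j) \<longlonglongrightarrow> 0" if "(i,j) \<in> E\<^sup>*" for i j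
    using that
  proof (induction rule: rtrancl_induct)
    case base then show ?case by simp
  next
    case (step b c)
    from tendsto_add[OF step.IH edge[OF step.hyps(2)]] show ?case by simp
  qed
  have zg: "(\<lambda>m. z (g m) i) \<longlonglongrightarrow> 0" if i: "i < n" for i
  proof -
    have eq: "z (g m) i = (1 / real n) * (\<Sum>j<n. y (g m) i - y (g m) j)" for m
    proof -
      have "(\<Sum>j<n. y (g m) i - y (g m) j) = real n * y (g m) i - real n * a"
        using suma[of "g m"] by (simp add: sum_subtractf)
      then show ?thesis using n1 by (simp add: z_def field_simps)
    qed
    have "(\<lambda>m. (\<Sum>j<n. y (g m) i - y (g m) j)) \<longlonglongrightarrow> (\<Sum>j<n. 0)"
    proof (rule tendsto_sum)
      fix j assume "j \<in> {..<n}"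
      then show "(\<lambda>m. y (g m) i - y (g m) j) \<longlonglongrightarrow> 0" using path Econ i by auto
    qed
    then have "(\<lambda>m. (1 / real n) * (\<Sum>j<n. y (g m) i - y (g m) j)) \<longlonglongrightarrow> (1 / real n) * (\<Sum>j<n. 0)"
      by (rule tendsto_mult[OF tendsto_const])
    then show ?thesis using eq by simp
  qed
  have "(\<lambda>m. V (g m)) \<longlonglongrightarrow> (\<Sum>i<n. 0^2)"
    unfolding V_def
  proof (rule tendsto_sum)
    fix i assume "i \<in> {..<n}"
    then show "(\<lambda>m. (z (g m) i)^2) \<longlonglongrightarrow> 0^2" using zg by (intro tendsto_power) auto
  qed
  then have "(V \<circ> g) \<longlonglongrightarrow> 0" by (simp add: comp_def)
  moreover have "(V \<circ> g) \<longlonglongrightarrow> L" by (rule LIMSEQ_subseq_LIMSEQ[OF VL g])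
  ultimately have L0: "L = 0" using LIMSEQ_unique by blast
  show ?thesis
  proof (intro allI impI)
    fix i assume i: "i < n"
    have le: "(z k i)^2 \<le> V k" for k
      unfolding V_def using i by (intro member_le_sum) auto
    have "(\<lambda>k. (z k i)^2) \<longlonglongrightarrow> 0"
    proof (rule tendsto_sandwich[of "\<lambda>_. 0" _ _ V])
      show "\<forall>\<^sub>F k in sequentially. 0 \<le> (z k i)^2" by simp
      show "\<forall>\<^sub>F k in sequentially. (z k i)^2 \<le> V k" using le by (simp add: always_eventually)
      show "((\<lambda>_. 0) \<longlongrightarrow> (0::real)) sequentially" by (rule tendsto_const)
      show "V \<longlonglongrightarrow> 0" using VL L0 by simp
    qed
    then have "(\<lambda>k. z k i) \<longlonglongrightarrow> 0" by (rule sq_tendsto0)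
    then have "(\<lambda>k. z k i + a) \<longlonglongrightarrow> 0 + a" by (rule tendsto_add[OF _ tendsto_const])
    then show "(\<lambda>k. y k i) \<longlonglongrightarrow> (1 / real n) * (\<Sum>j<n. y 0 j)" by (simp add: z_def a_def)
  qed
qed



lemma recon_delta:
  fixes D :: nat and v :: "nat \<Rightarrow> nat \<Rightarrow> real"
  assumes pos: "\<forall>l\<in>{1..D}. dotD D (v l) (v l) \<noteq> 0"
    and orth: "\<forall>l\<in>{1..D}. \<forall>m\<in>{1..D}. l \<noteq> m \<longrightarrow> dotD D (v l) (v m) = 0"
    and c: "c < D" and c': "c' < D"
  shows "(\<Sum>l\<in>{1..D}. v l c * v l c' / dotD D (v l) (v l)) = (if c = c' then 1 else 0)"
proof -
  define M where "M = mat D D (\<lambda>(a,b). v (Suc a) b / dotD D (v (Suc a)) (v (Suc a)))"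
  define Nt where "Nt = mat D D (\<lambda>(b,a). v (Suc a) b)"
  have Mc: "M \<in> carrier_mat D D" and Nc: "Nt \<in> carrier_mat D D" by (simp_all add: M_def Nt_def)
  have "M * Nt = 1\<^sub>m D"
  proof (rule eq_matI)
    fix a b assume a: "a < dim_row (1\<^sub>m D :: real mat)" and b: "b < dim_col (1\<^sub>m D :: real mat)"
    then have a': "a < D" and b': "b < D" by simp_all
    have "(M * Nt) $$ (a,b) = (\<Sum>c\<in>{0..<D}. v (Suc a) c / dotD D (v (Suc a)) (v (Suc a)) * v (Suc b) c)"
      using a' b' by (simp add: M_def Nt_def scalar_prod_def)
    also have "\<dots> = dotD D (v (Suc a)) (v (Suc b)) / dotD D (v (Suc a)) (v (Suc a))"
      unfolding dotD_def by (simp add: sum_divide_distrib atLeast0LessThan algebra_simps)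
    also have "\<dots> = (if a = b then 1 else 0)"
      using pos orth a' b' by auto
    finally show "(M * Nt) $$ (a,b) = 1\<^sub>m D $$ (a,b)" using a' b' by simp
  qed (simp_all add: M_def Nt_def)
  then have NM: "Nt * M = 1\<^sub>m D" by (rule mat_mult_left_right_inverse[OF Mc Nc])
  have "(Nt * M) $$ (c,c') = (\<Sum>a\<in>{0..<D}. v (Suc a) c * (v (Suc a) c' / dotD D (v (Suc a)) (v (Suc a))))"
    using c c' by (simp add: M_def Nt_def scalar_prod_def)
  also have "\<dots> = (\<Sum>a<D. v (Suc a) c * v (Suc a) c' / dotD D (v (Suc a)) (v (Suc a)))"
    by (simp add: atLeast0LessThan)
  also have "\<dots> = (\<Sum>l\<in>{Suc 0..D}. v l c * v l c' / dotD D (v l) (v l))"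
    by (rule sum.atLeast1_atMost_eq[symmetric])
  finally show ?thesis using NM c c' by simp
qed


lemma recon_vec:
  fixes D :: nat and v :: "nat \<Rightarrow> nat \<Rightarrow> real"
  assumes pos: "\<forall>l\<in>{1..D}. dotD D (v l) (v l) \<noteq> 0"
    and orth: "\<forall>l\<in>{1..D}. \<forall>m\<in>{1..D}. l \<noteq> m \<longrightarrow> dotD D (v l) (v m) = 0"
    and c: "c < D"
  shows "(\<Sum>l\<in>{1..D}. v l c / dotD D (v l) (v l) * dotD D (v l) w) = w c"
proof -
  have "(\<Sum>l\<in>{1..D}. v l c / dotD D (v l) (v l) * dotD D (v l) w)
      = (\<Sum>l\<in>{1..D}. \<Sum>c'<D. v l c * v l c' / dotD D (v l) (v l) * w c')"
    unfolding dotD_def by (simp add: sum_distrib_left mult.assoc)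
  also have "\<dots> = (\<Sum>c'<D. \<Sum>l\<in>{1..D}. v l c * v l c' / dotD D (v l) (v l) * w c')"
    by (rule sum.swap)
  also have "\<dots> = (\<Sum>c'<D. (if c = c' then 1 else 0) * w c')"
  proof (rule sum.cong[OF refl])
    fix c' assume "c' \<in> {..<D}"
    then have "(\<Sum>l\<in>{1..D}. v l c * v l c' / dotD D (v l) (v l)) = (if c = c' then 1 else 0)"
      using recon_delta[OF pos orth c] by simp
    then show "(\<Sum>l\<in>{1..D}. v l c * v l c' / dotD D (v l) (v l) * w c') = (if c = c' then 1 else 0) * w c'"
    proof -
      have "(\<Sum>l\<in>{1..D}. v l c * v l c' / dotD D (v l) (v l) * w c')
          = (\<Sum>l\<in>{1..D}. v l c * v l c' / dotD D (v l) (v l)) * w c'"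
        by (rule sum_distrib_right[symmetric])
      then show ?thesis using \<open>(\<Sum>l\<in>{1..D}. v l c * v l c' / dotD D (v l) (v l)) = (if c = c' then 1 else 0)\<close>
        by (simp only:)
    qed
  qed
  also have "\<dots> = (\<Sum>c'<D. if c = c' then w c' else 0)" by (rule sum.cong) auto
  also have "\<dots> = w c" using c by (simp add: sum.delta')
  finally show ?thesis .
qed

lemma mv_proj:
  "matvec D (\<lambda>a b. g * projM D p a b + z * projM D q a b) u =
   (\<lambda>a. g * p a * dotD D p u / dotD D p p + z * q a * dotD D q u / dotD D q q)"
  unfolding matvec_def projM_def dotD_def
  by (rule ext) (simp add: sum.distrib sum_distrib_left sum_divide_distrib algebra_simps)

lemma dot_lin2:
  "dotD D r (\<lambda>a. g * p a * s / t + z * q a * s' / t') =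
   g * dotD D r p * s / t + z * dotD D r q * s' / t'"
  unfolding dotD_def
  by (simp add: sum.distrib sum_distrib_left sum_divide_distrib algebra_simps)

lemma dot_diff: "dotD D p (\<lambda>b. x b - y b) = dotD D p x - dotD D p y"
  unfolding dotD_def by (simp add: sum_subtractf right_diff_distrib)

lemma matvec_neg: "matvec D M (\<lambda>b. x b - y b) c = - matvec D M (\<lambda>b. y b - x b) c"
  unfolding matvec_def by (simp add: sum_negf[symmetric] algebra_simps)



theorem mainTheorem1:
  fixes n d d' D :: nat
    and E :: "(nat \<times> nat) set"
    and H :: "nat set"  \<comment> \<open>honest-but-curious agents; the others in {..<n} are legitimate\<close>
    and \<sigma> :: real
    and v :: "nat \<Rightarrow> nat \<Rightarrow> real"   \<comment> \<open>v l = auxiliary vector v_l, l = 1..D\<close>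
    and A :: "nat \<Rightarrow> nat \<Rightarrow> nat \<Rightarrow> nat \<Rightarrow> nat \<Rightarrow> real"  \<comment> \<open>A k i j = weight matrix A_ij(k)\<close>
    and \<alpha> \<beta> :: "nat \<Rightarrow> nat \<Rightarrow> real"
    and \<gamma> \<zeta> :: "nat \<Rightarrow> nat \<Rightarrow> nat \<Rightarrow> real"  \<comment> \<open>\<gamma> r i j = gamma_ij^r\<close>
    and x :: "nat \<Rightarrow> nat \<Rightarrow> nat \<Rightarrow> real"  \<comment> \<open>x k i c = c-th coordinate of x_i(k)\<close>
  assumes n_gt1: "n > 1"
    and graph: "undirected_connected n E"
    and H_sub: "H \<subseteq> {..<n}"
    and d'_ge3: "d' \<ge> 3"
    and D_def: "D = d + d'"
    and sigma_pos: "\<sigma> > 0"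
    and v_nonzero: "\<forall>l\<in>{1..D}. \<exists>c<D. v l c \<noteq> 0"
    and v_orth: "\<forall>l\<in>{1..D}. \<forall>m\<in>{1..D}. l \<noteq> m \<longrightarrow> dotD D (v l) (v m) = 0"
    and v_nnz2: "\<forall>l\<in>{1..D}. nnz D (v l) \<ge> 2"
    and v1_nnz: "nnz D (v 1) < d'"
    and vD_full: "\<forall>c<D. v D c \<noteq> 0"
    and A0_sym: "\<forall>i j. (i,j) \<in> E \<longrightarrow> A 0 i j = A 0 j i"
    and A0_LH: "\<forall>i j. (i,j) \<in> E \<longrightarrow>
                  ((i \<notin> H \<and> j \<in> H) \<or> (i \<in> H \<and> j \<notin> H)) \<longrightarrow>
                  \<alpha> i j > 0 \<and> \<beta> i j > 0 \<and>
                  A 0 i j = (\<lambda>a b. \<alpha> i j * projM D (v 1) a b + \<beta> i j * projM D (v D) a b)"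
    and A_nonedge: "\<forall>k i j. (i,j) \<notin> E \<longrightarrow> A k i j = (\<lambda>a b. 0)"
    and A_dyn: "\<forall>k\<ge>1. \<forall>i j. (i,j) \<in> E \<longrightarrow>
                  A k i j = (\<lambda>a b. \<gamma> (rho (D - 1) k) i j * projM D (v (rho (D - 1) k)) a b
                                  + \<zeta> (rho (D - 1) k) i j * projM D (v D) a b)"
    and gz_sym: "\<forall>r i j. \<gamma> r i j = \<gamma> r j i \<and> \<zeta> r i j = \<zeta> r j i"
    and gz_bounds: "\<forall>r\<in>{1..D - 1}. \<forall>i j. (i,j) \<in> E \<longrightarrow>
                  0 < \<gamma> r i j \<and> \<gamma> r i j < 1 / (4 * (real n - 1) * \<sigma>) \<and>
                  0 < \<zeta> r i j \<and> \<zeta> r i j < 1 / (4 * (real n - 1) * \<sigma>)"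
    and update: "\<forall>k. \<forall>i<n. \<forall>c<D.
                  x (Suc k) i c = x k i c + \<sigma> * (\<Sum>j\<in>nbrs E i.
                      matvec D (A k i j) (\<lambda>b. x k j b - x k i b) c)"
  shows "\<forall>i<n. \<forall>c<D. (\<lambda>k. x k i c) \<longlonglongrightarrow> (1 / real n) * (\<Sum>j<n. x 0 j c)"
proof -
  have Esub: "E \<subseteq> {..<n} \<times> {..<n}" and Esym: "\<forall>i j. (i,j) \<in> E \<longrightarrow> (j,i) \<in> E"
    using graph unfolding undirected_connected_def by auto
  have finE: "finite E" using Esub by (rule finite_subset) auto
  have D3: "D \<ge> 3" using d'_ge3 D_def by simp
  have Npos: "\<forall>l\<in>{1..D}. dotD D (v l) (v l) \<noteq> 0"
  proof
    fix l assume l: "l \<in> {1..D}"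
    obtain c where c: "c < D" "v l c \<noteq> 0" using v_nonzero l by blast
    have "0 < (\<Sum>c<D. (v l c)^2)"
      by (rule sum_pos2[of "{..<D}" c]) (use c in auto)
    then show "dotD D (v l) (v l) \<noteq> 0" unfolding dotD_def by (simp add: power2_eq_square)
  qed
  have rho_rng: "rho (D - 1) k \<in> {1..D - 1}" for k
  proof -
    have "k mod (D - 1) < D - 1" using D3 by (intro mod_less_divisor) simp
    then show ?thesis unfolding rho_def using D3 by auto
  qed
  have rho_l: "rho (D - 1) (m * (D - 1) + l) = l" if l: "l \<in> {1..D - 1}" for m l
  proof (cases "l < D - 1")
    case True
    then have "(m * (D - 1) + l) mod (D - 1) = l" by simp
    then show ?thesis unfolding rho_def using l by simp
  next
    case False
    then have "l = D - 1" using l by simp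
    then have "(m * (D - 1) + l) mod (D - 1) = 0" by simp
    then show ?thesis unfolding rho_def using \<open>l = D - 1\<close> by simp
  qed
  have sum01: "(\<Sum>i<n. x (Suc 0) i c) = (\<Sum>i<n. x 0 i c)" if c: "c < D" for c
  proof -
    have pt: "x (Suc 0) i c = x 0 i c + \<sigma> * (\<Sum>j\<in>nbrs E i. matvec D (A 0 i j) (\<lambda>b. x 0 j b - x 0 i b) c)"
      if "i \<in> {..<n}" for i
      using update that c by auto
    have "(\<Sum>i<n. x (Suc 0) i c) = (\<Sum>i<n. x 0 i c + \<sigma> * (\<Sum>j\<in>nbrs E i. matvec D (A 0 i j) (\<lambda>b. x 0 j b - x 0 i b) c))"
      by (rule sum.cong[OF refl pt])
    also have "\<dots> = (\<Sum>i<n. x 0 i c) + \<sigma> * (\<Sum>i<n. \<Sum>j\<in>nbrs E i. matvec D (A 0 i j) (\<lambda>b. x 0 j b - x 0 i b) c)"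
      by (simp add: sum.distrib sum_distrib_left)
    also have "(\<Sum>i<n. \<Sum>j\<in>nbrs E i. matvec D (A 0 i j) (\<lambda>b. x 0 j b - x 0 i b) c) = 0"
    proof (rule antisym_sum_zero[OF Esub Esym], intro allI impI)
      fix i j assume "(i,j) \<in> E"
      then have eq: "A 0 j i = A 0 i j" using A0_sym by metis
      show "matvec D (A 0 i j) (\<lambda>b. x 0 j b - x 0 i b) c = - matvec D (A 0 j i) (\<lambda>b. x 0 i b - x 0 j b) c"
        unfolding eq by (rule matvec_neg)
    qed
    finally show ?thesis by simp
  qed
  define avg where "avg c = (1 / real n) * (\<Sum>j<n. x 0 j c)" for c
  define coef where "coef l k i j = (if l = rho (D - 1) k then \<gamma> (rho (D - 1) k) i j else 0)
      + (if l = D then \<zeta> (rho (D - 1) k) i j else 0)" for l k i j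
  have mvcomp: "dotD D (v l) (matvec D (A k i j) u) = coef l k i j * dotD D (v l) u"
    if k: "k \<ge> 1" and ij: "(i,j) \<in> E" and l: "l \<in> {1..D}" for l k i j u
  proof -
    define r where "r = rho (D - 1) k"
    have r: "r \<in> {1..D - 1}" unfolding r_def by (rule rho_rng)
    have rD: "r \<in> {1..D}" "r \<noteq> D" using r D3 by auto
    have Ak: "A k i j = (\<lambda>a b. \<gamma> r i j * projM D (v r) a b + \<zeta> r i j * projM D (v D) a b)"
      using A_dyn k ij unfolding r_def by blast
    have "dotD D (v l) (matvec D (A k i j) u) =
       \<gamma> r i j * dotD D (v l) (v r) * dotD D (v r) u / dotD D (v r) (v r)
       + \<zeta> r i j * dotD D (v l) (v D) * dotD D (v D) u / dotD D (v D) (v D)"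
      unfolding Ak mv_proj dot_lin2 by (rule refl)
    moreover have "dotD D (v l) (v r) = (if l = r then dotD D (v r) (v r) else 0)"
      using v_orth l rD by auto
    moreover have "dotD D (v l) (v D) = (if l = D then dotD D (v D) (v D) else 0)"
      using v_orth l D3 by auto
    moreover have "dotD D (v r) (v r) \<noteq> 0" "dotD D (v D) (v D) \<noteq> 0" using Npos rD D3 by auto
    ultimately show ?thesis using rD unfolding coef_def r_def[symmetric] by auto
  qed
  have cupd: "dotD D (v l) (x (Suc k) i) = dotD D (v l) (x k i)
      + (\<Sum>j\<in>nbrs E i. \<sigma> * coef l k i j * (dotD D (v l) (x k j) - dotD D (v l) (x k i)))"
    if k: "k \<ge> 1" and i: "i < n" and l: "l \<in> {1..D}" for l k i
  proof -
    define f where "f j = matvec D (A k i j) (\<lambda>b. x k j b - x k i b)" for j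
    have "dotD D (v l) (x (Suc k) i) = (\<Sum>c<D. v l c * (x k i c + \<sigma> * (\<Sum>j\<in>nbrs E i. f j c)))"
      unfolding dotD_def f_def using update i by (intro sum.cong) auto
    also have "\<dots> = (\<Sum>c<D. v l c * x k i c) + \<sigma> * (\<Sum>c<D. v l c * (\<Sum>j\<in>nbrs E i. f j c))"
      by (simp add: distrib_left sum.distrib sum_distrib_left mult.left_commute)
    also have "(\<Sum>c<D. v l c * (\<Sum>j\<in>nbrs E i. f j c)) = (\<Sum>c<D. \<Sum>j\<in>nbrs E i. v l c * f j c)"
      by (simp add: sum_distrib_left)
    also have "\<dots> = (\<Sum>j\<in>nbrs E i. \<Sum>c<D. v l c * f j c)" by (rule sum.swap)
    also have "\<dots> = (\<Sum>j\<in>nbrs E i. coef l k i j * (dotD D (v l) (x k j) - dotD D (v l) (x k i)))"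
    proof (rule sum.cong[OF refl])
      fix j assume "j \<in> nbrs E i"
      then have ij: "(i,j) \<in> E" by (simp add: nbrs_def)
      have "(\<Sum>c<D. v l c * f j c) = dotD D (v l) (f j)" by (simp add: dotD_def)
      also have "\<dots> = coef l k i j * dotD D (v l) (\<lambda>b. x k j b - x k i b)"
        unfolding f_def by (rule mvcomp[OF k ij l])
      also have "\<dots> = coef l k i j * (dotD D (v l) (x k j) - dotD D (v l) (x k i))"
        by (simp only: dot_diff)
      finally show "(\<Sum>c<D. v l c * f j c) = coef l k i j * (dotD D (v l) (x k j) - dotD D (v l) (x k i))" .
    qed
    finally show ?thesis by (simp add: dotD_def sum_distrib_left mult.assoc)
  qed
  define S where "S = (\<lambda>(r,i,j). \<sigma> * \<gamma> r i j) ` ({1..D - 1} \<times> E) \<union> (\<lambda>(r,i,j). \<sigma> * \<zeta> r i j) ` ({1..D - 1} \<times> E)"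
  define \<epsilon> where "\<epsilon> = Min (insert 1 S)"
  have finS: "finite (insert 1 S)" unfolding S_def using finE by simp
  have Spos: "\<forall>s\<in>S. 0 < s" unfolding S_def using gz_bounds sigma_pos by auto
  have eps: "\<epsilon> > 0" unfolding \<epsilon>_def using finS Spos by (subst Min_gr_iff) auto
  have eps_g: "\<epsilon> \<le> \<sigma> * \<gamma> r i j" and eps_z: "\<epsilon> \<le> \<sigma> * \<zeta> r i j"
    if "r \<in> {1..D - 1}" "(i,j) \<in> E" for r i j
  proof -
    have "\<sigma> * \<gamma> r i j \<in> insert 1 S" "\<sigma> * \<zeta> r i j \<in> insert 1 S"
      unfolding S_def using that by (force intro: imageI)+
    then show "\<epsilon> \<le> \<sigma> * \<gamma> r i j" "\<epsilon> \<le> \<sigma> * \<zeta> r i j" unfolding \<epsilon>_def using finS by auto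
  qed
  have comp_lim: "(\<lambda>k. dotD D (v l) (x k i)) \<longlonglongrightarrow> dotD D (v l) avg" if l: "l \<in> {1..D}" and i: "i < n" for l i
  proof -
    define y where "y k i = dotD D (v l) (x (Suc k) i)" for k i
    define w where "w k i j = \<sigma> * coef l (Suc k) i j" for k i j
    have coef_cases: "coef l k i j = 0 \<or> coef l k i j = \<gamma> (rho (D - 1) k) i j \<or> coef l k i j = \<zeta> (rho (D - 1) k) i j" for k i j
      unfolding coef_def using rho_rng[of k] D3 by auto
    have wsym: "\<forall>k i j. w k i j = w k j i" unfolding w_def coef_def using gz_sym by simp
    have wnn: "\<forall>k i j. (i,j) \<in> E \<longrightarrow> 0 \<le> w k i j"
    proof (intro allI impI)
      fix k i j assume ij: "(i,j) \<in> E"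
      have "0 < \<gamma> (rho (D - 1) (Suc k)) i j" "0 < \<zeta> (rho (D - 1) (Suc k)) i j"
        using gz_bounds rho_rng ij by blast+
      then have "0 \<le> coef l (Suc k) i j" using coef_cases[of "Suc k" i j] by auto
      then show "0 \<le> w k i j" unfolding w_def using sigma_pos by simp
    qed
    have wle: "\<forall>k i j. (i,j) \<in> E \<longrightarrow> w k i j \<le> 1 / (4 * (real n - 1))"
    proof (intro allI impI)
      fix k i j assume ij: "(i,j) \<in> E"
      have b: "\<gamma> (rho (D - 1) (Suc k)) i j < 1 / (4 * (real n - 1) * \<sigma>)"
         "\<zeta> (rho (D - 1) (Suc k)) i j < 1 / (4 * (real n - 1) * \<sigma>)"
        using gz_bounds rho_rng ij by blast+
      have "coef l (Suc k) i j \<le> 1 / (4 * (real n - 1) * \<sigma>)"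
        using coef_cases[of "Suc k" i j] b n_gt1 sigma_pos by auto
      then have "\<sigma> * coef l (Suc k) i j \<le> \<sigma> * (1 / (4 * (real n - 1) * \<sigma>))"
        using sigma_pos by (intro mult_left_mono) auto
      also have "\<dots> = 1 / (4 * (real n - 1))" using sigma_pos by simp
      finally show "w k i j \<le> 1 / (4 * (real n - 1))" unfolding w_def .
    qed
    have upd: "\<forall>k. \<forall>i<n. y (Suc k) i = y k i + (\<Sum>j\<in>nbrs E i. w k i j * (y k j - y k i))"
      unfolding y_def w_def using cupd[OF _ _ l] by simp
    obtain g :: "nat \<Rightarrow> nat" where g: "strict_mono g" "\<forall>m i j. (i,j) \<in> E \<longrightarrow> \<epsilon> \<le> w (g m) i j"
    proof (cases "l = D")
      case True
      show ?thesis
      proof (rule that[of id])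
        show "strict_mono (id :: nat \<Rightarrow> nat)" by (simp add: strict_mono_def)
        show "\<forall>m i j. (i,j) \<in> E \<longrightarrow> \<epsilon> \<le> w (id m) i j"
        proof (intro allI impI)
          fix m i j assume ij: "(i,j) \<in> E"
          have r: "rho (D - 1) (Suc m) \<in> {1..D - 1}" by (rule rho_rng)
          then have "rho (D - 1) (Suc m) \<noteq> D" using D3 by auto
          then have "w m i j = \<sigma> * \<zeta> (rho (D - 1) (Suc m)) i j"
            unfolding w_def coef_def using True by simp
          then show "\<epsilon> \<le> w (id m) i j" using eps_z[OF r ij] by simp
        qed
      qed
    next
      case False
      then have l': "l \<in> {1..D - 1}" using l by auto
      show ?thesis
      proof (rule that[of "\<lambda>m. m * (D - 1) + l - 1"])
        show "strict_mono (\<lambda>m. m * (D - 1) + l - 1)"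
          unfolding strict_mono_Suc_iff using l' D3 by auto
        show "\<forall>m i j. (i,j) \<in> E \<longrightarrow> \<epsilon> \<le> w (m * (D - 1) + l - 1) i j"
        proof (intro allI impI)
          fix m i j assume ij: "(i,j) \<in> E"
          have s: "Suc (m * (D - 1) + l - 1) = m * (D - 1) + l" using l' by simp
          have "w (m * (D - 1) + l - 1) i j = \<sigma> * \<gamma> l i j"
            unfolding w_def coef_def s rho_l[OF l'] using False by simp
          then show "\<epsilon> \<le> w (m * (D - 1) + l - 1) i j" using eps_g[OF l' ij] by simp
        qed
      qed
    qed
    have "\<forall>i<n. (\<lambda>k. y k i) \<longlonglongrightarrow> (1 / real n) * (\<Sum>j<n. y 0 j)"
      by (rule consensus[OF n_gt1 graph wsym wnn wle upd g(1) eps g(2)])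
    then have "(\<lambda>k. y k i) \<longlonglongrightarrow> (1 / real n) * (\<Sum>j<n. y 0 j)" using i by blast
    then have lim: "(\<lambda>k. dotD D (v l) (x (Suc k) i)) \<longlonglongrightarrow> (1 / real n) * (\<Sum>j<n. y 0 j)"
      unfolding y_def .
    have "(1 / real n) * (\<Sum>j<n. y 0 j) = (1 / real n) * (\<Sum>c<D. v l c * (\<Sum>j<n. x (Suc 0) j c))"
      unfolding y_def dotD_def by (simp add: sum_distrib_left sum.swap[of _ "{..<n}"])
    also have "\<dots> = (1 / real n) * (\<Sum>c<D. v l c * (\<Sum>j<n. x 0 j c))"
      using sum01 by simp
    also have "\<dots> = dotD D (v l) avg"
      unfolding dotD_def avg_def by (simp add: sum_distrib_left mult.left_commute)
    finally have "(\<lambda>k. dotD D (v l) (x (Suc k) i)) \<longlonglongrightarrow> dotD D (v l) avg" using lim by simp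
    then show ?thesis by (rule LIMSEQ_imp_Suc)
  qed
  show ?thesis
  proof (intro allI impI)
    fix i c assume i: "i < n" and c: "c < D"
    have "(\<lambda>k. \<Sum>l\<in>{1..D}. v l c / dotD D (v l) (v l) * dotD D (v l) (x k i))
        \<longlonglongrightarrow> (\<Sum>l\<in>{1..D}. v l c / dotD D (v l) (v l) * dotD D (v l) avg)"
    proof (rule tendsto_sum)
      fix l assume "l \<in> {1..D}"
      then show "(\<lambda>k. v l c / dotD D (v l) (v l) * dotD D (v l) (x k i))
          \<longlonglongrightarrow> v l c / dotD D (v l) (v l) * dotD D (v l) avg"
        by (intro tendsto_mult[OF tendsto_const] comp_lim i)
    qed
    moreover have "(\<Sum>l\<in>{1..D}. v l c / dotD D (v l) (v l) * dotD D (v l) (x k i)) = x k i c" for k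
      by (rule recon_vec[OF Npos v_orth c])
    moreover have "(\<Sum>l\<in>{1..D}. v l c / dotD D (v l) (v l) * dotD D (v l) avg) = avg c"
      by (rule recon_vec[OF Npos v_orth c])
    ultimately show "(\<lambda>k. x k i c) \<longlonglongrightarrow> (1 / real n) * (\<Sum>j<n. x 0 j c)"
      unfolding avg_def by simp
  qed
qed


end
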